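(* Let $\epsilon\in(0,1)$, $u_0\in\mathbb{R}$, $h>0$, and let $(u_n)_{n\ge0}$ be a sequence of real numbers starting at $u_0$ and satisfying the Crank–Nicolson scheme $$\frac{u_n-u_{n-1}}{h}+\frac{1}{2\epsilon^2}\big(u_n^3-u_n\big)+\frac{1}{2\epsilon^2}\big(u_{n-1}^3-u_{n-1}\big)=0,\qquad n\ge1.$$ (i) If $u_0\in\{0,1,-1\}$ and $h\le 2\epsilon^2$, then $u_n=\mathrm{sign}(u_0)$ for all $n\ge1$. (ii) If $u_0\notin\{0,1,-1\}$, define $h^*(u_0,\epsilon)=\frac{2\epsilon^2}{u_0^2+|u_0|}$ if $|u_0|>1$ and $h^*(u_0,\epsilon)=\epsilon^2$ if $0<|u_0|<1$. Then $h^*>0$ and for every $h\in(0,h^*]$ the sequence $(u_n)$ is monotone and converges to $\mathrm{sign}(u_0)$ as $n\to\infty$. Moreover, $\inf_{u_0\in\mathbb{R}\setminus\{0,\pm1\}}h^*(u_0,\epsilon)=0$.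
   Context: The scheme discretizes the ODE $u'(t)+\frac{1}{\epsilon^2}(u^3-u)=0$, $u(0)=u_0$. For $h\le 2\epsilon^2$ each step equation has a unique real solution $u_n$. Here $\mathrm{sign}(0)=0$. *)

theory Defs
  imports Complex_Main
begin

text \<open>Crank--Nicolson step relation for u' + (u^3-u)/eps^2 = 0.\<close>
definition CN_scheme :: "real \<Rightarrow> real \<Rightarrow> (nat \<Rightarrow> real) \<Rightarrow> bool" where
  "CN_scheme eps h u \<longleftrightarrow>
     (\<forall>n\<ge>1. (u n - u (n - 1)) / h + (1 / (2 * eps^2)) * (u n ^ 3 - u n)
              + (1 / (2 * eps^2)) * (u (n - 1) ^ 3 - u (n - 1)) = 0)"

text \<open>Threshold step size h*(u0, eps) (only meaningful for u0 not in {0,1,-1}).\<close>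
definition hstar :: "real \<Rightarrow> real \<Rightarrow> real" where
  "hstar u0 eps = (if \<bar>u0\<bar> > 1 then 2 * eps^2 / (u0^2 + \<bar>u0\<bar>) else eps^2)"

end

theory Submission
  imports Defs
begin

lemma aux:
  fixes a b c h A B :: real
  assumes "h > 0" "(a-b)/h + c*A + c*B = 0"
  shows "a + (h*c)*A = b - (h*c)*B"
proof -
  have "(a-b)/h = -(c*A+c*B)" using assms(2) by linarith
  then have "a - b = h*(-(c*A+c*B))" using assms(1) by (simp add: divide_eq_eq mult.commute)
  then show ?thesis by (simp add: algebra_simps)
qed

lemma step:
  assumes "0 < eps" "0 < h" "CN_scheme eps h u"
  shows "u (Suc n) + (h/(2*eps^2))*(u (Suc n)^3 - u (Suc n)) = u n - (h/(2*eps^2))*(u n^3 - u n)"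
proof -
  have "(u (Suc n) - u n) / h + (1 / (2 * eps^2)) * (u (Suc n) ^ 3 - u (Suc n))
              + (1 / (2 * eps^2)) * (u n ^ 3 - u n) = 0"
    using assms(3) unfolding CN_scheme_def by (metis diff_Suc_1 le_add1 plus_1_eq_Suc)
  from aux[OF assms(2) this] show ?thesis by simp
qed

lemma gmono:
  fixes k x y :: real
  assumes "0 \<le> k" "k \<le> 1" "x < y"
  shows "x + k*(x^3-x) < y + k*(y^3-y)"
proof -
  have q: "x^2 + x*y + y^2 > 0"
  proof (cases "x = 0")
    case True then show ?thesis using assms by simp
  next
    case False
    have "x^2 + x*y + y^2 = (y + x/2)^2 + 3/4*x^2" by (simp add: power2_eq_square algebra_simps)
    moreover have "(y + x/2)^2 \<ge> 0" by simp
    moreover have "3/4*x^2 > 0" using False by simp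
    ultimately show ?thesis by linarith
  qed
  have "(1 - k) + k*(x^2 + x*y + y^2) > 0"
  proof (cases "k = 0")
    case True then show ?thesis by simp
  next
    case False then have "k > 0" using assms by simp
    then have "k*(x^2 + x*y + y^2) > 0" using q by simp
    then show ?thesis using assms by simp
  qed
  then have "(y - x) * ((1 - k) + k*(x^2 + x*y + y^2)) > 0" using assms by simp
  moreover have "(y + k*(y^3-y)) - (x + k*(x^3-x)) = (y - x) * ((1 - k) + k*(x^2 + x*y + y^2))"
    by (simp add: power2_eq_square power3_eq_cube algebra_simps)
  ultimately show ?thesis by simp
qed

lemma gle:
  fixes k x y :: real
  assumes "0 \<le> k" "k \<le> 1" "x + k*(x^3-x) \<le> y + k*(y^3-y)"
  shows "x \<le> y"
  using gmono[OF assms(1,2), of y x] assms(3) by (cases x y rule: linorder_cases) auto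

lemma gless:
  fixes k x y :: real
  assumes "0 \<le> k" "k \<le> 1" "x + k*(x^3-x) < y + k*(y^3-y)"
  shows "x < y"
  using gmono[OF assms(1,2), of y x] assms(3) by (cases x y rule: linorder_cases) auto

lemma lim_fix:
  fixes k L :: real
  assumes "k > 0" "\<And>n. u (Suc n) + k*(u (Suc n)^3 - u (Suc n)) = u n - k*(u n^3 - u n)"
    and "u \<longlonglongrightarrow> L"
  shows "L^3 = L"
proof -
  have a: "(\<lambda>n. u (Suc n) + k*(u (Suc n)^3 - u (Suc n))) \<longlonglongrightarrow> L + k*(L^3 - L)"
    using LIMSEQ_Suc[OF assms(3)] by (intro tendsto_intros)
  have b: "(\<lambda>n. u n - k*(u n^3 - u n)) \<longlonglongrightarrow> L - k*(L^3 - L)"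
    using assms(3) by (intro tendsto_intros)
  from a have "(\<lambda>n. u n - k*(u n^3 - u n)) \<longlonglongrightarrow> L + k*(L^3 - L)" using assms(2) by simp
  with b have "L + k*(L^3 - L) = L - k*(L^3 - L)" using LIMSEQ_unique by blast
  then have "k*(L^3-L) = 0" by simp
  then show ?thesis using assms(1) by simp
qed

lemma big:
  fixes k u0 :: real
  assumes "0 < k" "k*(u0^2+u0) \<le> 1" "u0 > 1" "u 0 = u0"
    and st: "\<And>n. u (Suc n) + k*(u (Suc n)^3 - u (Suc n)) = u n - k*(u n^3 - u n)"
  shows "antimono u \<and> u \<longlonglongrightarrow> 1"
proof -
  have k1: "k \<le> 1"
  proof -
    have "u0^2 \<ge> 0" by simp
    then have "u0^2 + u0 \<ge> 1" using assms(3) by linarith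
    then have "k * 1 \<le> k*(u0^2+u0)" using assms(1) by (intro mult_left_mono) auto
    then show ?thesis using assms(2) by simp
  qed
  have inv: "1 \<le> u n \<and> u n \<le> u0" for n
  proof (induction n)
    case 0 then show ?case using assms by simp
  next
    case (Suc n)
    let ?x = "u n"
    have "k*(?x*(?x+1)) \<le> k*(u0*(u0+1))"
      using Suc assms(1) by (intro mult_left_mono mult_mono) auto
    then have "k*(?x*(?x+1)) \<le> 1" using assms(2) by (simp add: power2_eq_square algebra_simps)
    then have "(?x - 1)*(1 - k*(?x*(?x+1))) \<ge> 0" using Suc by simp
    moreover have "?x - k*(?x^3 - ?x) - 1 = (?x - 1)*(1 - k*(?x*(?x+1)))"
      by (simp add: power3_eq_cube algebra_simps)
    ultimately have "1 + k*(1^3-1) \<le> u (Suc n) + k*(u (Suc n)^3 - u (Suc n))" using st[of n] by simp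
    then have s1: "1 \<le> u (Suc n)" using gle[OF _ k1] assms(1) by (meson less_imp_le)
    have "?x^2 \<ge> 1" using Suc by (intro one_le_power) auto
    then have "?x * ?x^2 \<ge> ?x * 1" using Suc by (intro mult_left_mono) auto
    then have "?x^3 - ?x \<ge> 0" by (simp add: power2_eq_square power3_eq_cube)
    then have "u (Suc n) + k*(u (Suc n)^3 - u (Suc n)) \<le> ?x + k*(?x^3-?x)"
      using st[of n] assms(1) mult_nonneg_nonneg[of k "?x^3-?x"] by linarith
    then have "u (Suc n) \<le> ?x" using gle[OF _ k1] assms(1) by (meson less_imp_le)
    then show ?case using s1 Suc by simp
  qed
  have dec: "u (Suc n) \<le> u n" for n
  proof -
    let ?x = "u n"
    have "?x^2 \<ge> 1" using inv[of n] by (intro one_le_power) auto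
    then have "?x * ?x^2 \<ge> ?x * 1" using inv[of n] by (intro mult_left_mono) auto
    then have "?x^3 - ?x \<ge> 0" by (simp add: power2_eq_square power3_eq_cube)
    then have "u (Suc n) + k*(u (Suc n)^3 - u (Suc n)) \<le> ?x + k*(?x^3-?x)"
      using st[of n] assms(1) mult_nonneg_nonneg[of k "?x^3-?x"] by linarith
    then show "u (Suc n) \<le> ?x" using gle[OF _ k1] assms(1) by (meson less_imp_le)
  qed
  then have d: "antimono u" by (simp add: decseq_Suc_iff)
  obtain L where L: "u \<longlonglongrightarrow> L" "\<forall>i. L \<le> u i" using decseq_convergent[OF d, of 1] inv by blast
  have L1: "L \<ge> 1" using inv by (intro LIMSEQ_le_const[OF L(1)]) auto
  have "L^3 = L" using lim_fix[OF assms(1) st L(1)] .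
  then have "L * (L - 1) * (L + 1) = 0" by (simp add: power3_eq_cube algebra_simps)
  then have "L = 1" using L1 by auto
  then show ?thesis using d L by simp
qed

lemma small:
  fixes k u0 :: real
  assumes "0 < k" "k \<le> 1/2" "0 < u0" "u0 < 1" "u 0 = u0"
    and st: "\<And>n. u (Suc n) + k*(u (Suc n)^3 - u (Suc n)) = u n - k*(u n^3 - u n)"
  shows "mono u \<and> u \<longlonglongrightarrow> 1"
proof -
  have k1: "k \<le> 1" using assms by simp
  have stp: "0 < u (Suc n) \<and> u (Suc n) < 1 \<and> u n \<le> u (Suc n)" if P: "0 < u n" "u n < 1" for n
  proof -
    let ?x = "u n"
    have "?x*(?x+1) < 1*2" using P by (intro mult_strict_mono) auto
    then have "k*(?x*(?x+1)) < k*2" using assms(1) by simp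
    then have "k*(?x*(?x+1)) < 1" using assms(2) by simp
    then have "(1 - ?x)*(1 - k*(?x*(?x+1))) > 0" using P by simp
    moreover have "1 - (?x - k*(?x^3 - ?x)) = (1 - ?x)*(1 - k*(?x*(?x+1)))"
      by (simp add: power3_eq_cube algebra_simps)
    ultimately have "u (Suc n) + k*(u (Suc n)^3 - u (Suc n)) < 1 + k*(1^3-1)" using st[of n] by simp
    then have s1: "u (Suc n) < 1" using gless[OF _ k1] assms(1) by (meson less_imp_le)
    have "?x^2 \<le> 1" using P by (intro power_le_one) auto
    then have "?x * ?x^2 \<le> ?x * 1" using P by (intro mult_left_mono) auto
    then have "?x^3 \<le> ?x" by (simp add: power2_eq_square power3_eq_cube)
    then have "k*(?x^3-?x) \<le> 0" using assms(1) by (intro mult_nonneg_nonpos) auto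
    then have "?x + k*(?x^3-?x) \<le> u (Suc n) + k*(u (Suc n)^3 - u (Suc n))"
      using st[of n] by linarith
    then have "?x \<le> u (Suc n)" using gle[OF _ k1] assms(1) by (meson less_imp_le)
    then show ?thesis using s1 P by simp
  qed
  have inv0: "0 < u n \<and> u n < 1" for n
  proof (induction n)
    case 0 then show ?case using assms by simp
  next
    case (Suc n) then show ?case using stp[of n] by blast
  qed
  have inv: "0 < u n \<and> u n < 1 \<and> u n \<le> u (Suc n)" for n using inv0 stp by blast
  have i: "mono u" using inv by (simp add: incseq_Suc_iff)
  have b1: "\<forall>i. u i \<le> 1" using inv by (simp add: less_imp_le)
  obtain L where L: "u \<longlonglongrightarrow> L" "\<forall>i. u i \<le> L" using incseq_convergent[OF i b1] by blast
  have "u 0 \<le> L" using L(2) by blast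
  then have L1: "L > 0" using inv[of 0] by linarith
  have "L^3 = L" using lim_fix[OF assms(1) st L(1)] .
  then have "L * (L - 1) * (L + 1) = 0" by (simp add: power3_eq_cube algebra_simps)
  then have "L = 1" using L1 by auto
  then show ?thesis using i L by simp
qed


lemma neg_step:
  fixes u :: "nat \<Rightarrow> real" and k :: real
  assumes "\<And>n. u (Suc n) + k*(u (Suc n)^3 - u (Suc n)) = u n - k*(u n^3 - u n)"
  shows "(\<lambda>n. - u n) (Suc n) + k*(((\<lambda>n. - u n) (Suc n))^3 - (\<lambda>n. - u n) (Suc n))
       = (\<lambda>n. - u n) n - k*(((\<lambda>n. - u n) n)^3 - (\<lambda>n. - u n) n)"
proof -
  have e: "k*((- a)^3 - - a) = - (k*(a^3 - a))" for a :: real by (simp add: power3_eq_cube algebra_simps)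
  show ?thesis unfolding e using assms[of n] by linarith
qed

lemma inf_part:
  fixes eps :: real
  assumes "0 < eps" "eps < 1"
  shows "(INF v\<in>- {0, 1, -1}. hstar v eps) = 0"
proof -
  have pos: "0 \<le> hstar v eps" for v
  proof -
    have "u0^2 + \<bar>u0\<bar> \<ge> 0" for u0 :: real by simp
    then show ?thesis unfolding hstar_def by simp
  qed
  have "(2::real) \<in> - {0, 1, -1}" by simp
  then have ne: "- {0, 1, -1::real} \<noteq> {}" by blast
  have bdd: "bdd_below ((\<lambda>v. hstar v eps) ` (- {0, 1, -1}))" using pos by (intro bdd_belowI2) auto
  have lo: "0 \<le> (INF v\<in>- {0, 1, -1}. hstar v eps)" using ne pos by (intro cINF_greatest) auto
  have up: "(INF v\<in>- {0, 1, -1}. hstar v eps) \<le> 0 + d" if d: "d > 0" for d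
  proof -
    define v where "v = 2 + 2/d"
    have v2: "v > 2" using d unfolding v_def by simp
    have vS: "v \<in> - {0, 1, -1}" using v2 by auto
    have hv: "hstar v eps = 2*eps^2/(v^2+v)" using v2 unfolding hstar_def by simp
    have "d*v = 2*d + 2" using d unfolding v_def by (simp add: field_simps)
    moreover have "d*v^2 \<ge> 0" using d by simp
    moreover have "eps^2 < 1" using assms by (simp add: power_less_one_iff abs_less_iff)
    moreover have "d*(v^2+v) = d*v^2 + d*v" by (simp add: algebra_simps)
    ultimately have "2*eps^2 \<le> d*(v^2+v)" using d by linarith
    moreover have "v^2 + v > 0" using v2 by (simp add: add_pos_pos)
    ultimately have "hstar v eps \<le> d" unfolding hv by (simp add: divide_le_eq mult.commute)
    moreover have "(INF v\<in>- {0, 1, -1}. hstar v eps) \<le> hstar v eps" using bdd vS by (rule cINF_lower)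
    ultimately show ?thesis by simp
  qed
  have "(INF v\<in>- {0, 1, -1}. hstar v eps) \<le> 0" using up by (rule field_le_epsilon)
  with lo show ?thesis by simp
qed

theorem theorem3p2:
  fixes eps u0 h :: real and u :: "nat \<Rightarrow> real"
  assumes eps: "0 < eps" "eps < 1"
    and h: "0 < h"
    and init: "u 0 = u0"
    and scheme: "CN_scheme eps h u"
  shows "(u0 \<in> {0, 1, -1} \<and> h \<le> 2 * eps^2 \<longrightarrow> (\<forall>n\<ge>1. u n = sgn u0))
       \<and> (u0 \<notin> {0, 1, -1} \<longrightarrow>
            0 < hstar u0 eps \<and>
            (h \<le> hstar u0 eps \<longrightarrow> (mono u \<or> antimono u) \<and> u \<longlonglongrightarrow> sgn u0))
       \<and> (INF v\<in>- {0, 1, -1}. hstar v eps) = 0"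
proof -
  define k where "k = h/(2*eps^2)"
  have e2: "eps^2 > 0" using eps by simp
  have kpos: "k > 0" unfolding k_def using h e2 by simp
  have st: "\<And>n. u (Suc n) + k*(u (Suc n)^3 - u (Suc n)) = u n - k*(u n^3 - u n)"
    unfolding k_def using step[OF eps(1) h scheme] by blast
  have P1: "u0 \<in> {0, 1, -1} \<and> h \<le> 2 * eps^2 \<longrightarrow> (\<forall>n\<ge>1. u n = sgn u0)"
  proof (intro impI)
    assume a: "u0 \<in> {0, 1, -1} \<and> h \<le> 2 * eps^2"
    have k1: "k \<le> 1" unfolding k_def using a e2 by (simp add: divide_le_eq)
    have c: "u0^3 = u0" and sg: "sgn u0 = u0" using a by auto
    have "u n = u0" for n
    proof (induction n)
      case 0 then show ?case using init by simp
    next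
      case (Suc n)
      have eq: "u (Suc n) + k*(u (Suc n)^3 - u (Suc n)) = u0 + k*(u0^3 - u0)"
        using st[of n] Suc c by simp
      show ?case using gle[OF less_imp_le[OF kpos] k1, of "u (Suc n)" u0]
          gle[OF less_imp_le[OF kpos] k1, of u0 "u (Suc n)"] eq by simp
    qed
    then show "\<forall>n\<ge>1. u n = sgn u0" using sg by simp
  qed
  have P2: "u0 \<notin> {0, 1, -1} \<longrightarrow> 0 < hstar u0 eps \<and>
            (h \<le> hstar u0 eps \<longrightarrow> (mono u \<or> antimono u) \<and> u \<longlonglongrightarrow> sgn u0)"
  proof (rule impI, rule conjI)
    assume nz: "u0 \<notin> {0, 1, -1}"
    have "u0^2 > 0" using nz by simp
    then have pp: "u0^2 + \<bar>u0\<bar> > 0" by (simp add: add_pos_nonneg)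
    show "0 < hstar u0 eps" unfolding hstar_def using e2 pp by simp
    show "h \<le> hstar u0 eps \<longrightarrow> (mono u \<or> antimono u) \<and> u \<longlonglongrightarrow> sgn u0"
    proof
      assume hh: "h \<le> hstar u0 eps"
      define v where "v = (\<lambda>n. - u n)"
      have stv: "\<And>n. v (Suc n) + k*(v (Suc n)^3 - v (Suc n)) = v n - k*(v n^3 - v n)"
        unfolding v_def using neg_step[of u k, OF st] by simp
      have uv: "u = (\<lambda>n. - v n)" unfolding v_def by simp
      consider "u0 > 1" | "u0 < -1" | "0 < u0 \<and> u0 < 1" | "-1 < u0 \<and> u0 < 0" using nz by force
      then show "(mono u \<or> antimono u) \<and> u \<longlonglongrightarrow> sgn u0"
      proof cases
        case 1
        have "h \<le> 2*eps^2/(u0^2+u0)" using hh 1 unfolding hstar_def by simp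
        moreover have "u0^2 + u0 > 0" using 1 by (simp add: add_pos_pos)
        ultimately have "h*(u0^2+u0) \<le> 2*eps^2" by (simp add: le_divide_eq)
        then have "k*(u0^2+u0) \<le> 1" unfolding k_def using e2 by (simp add: divide_le_eq)
        from big[OF kpos this 1 init st] show ?thesis using 1 by simp
      next
        case 2
        have "h \<le> 2*eps^2/((-u0)^2+(-u0))" using hh 2 unfolding hstar_def by simp
        moreover have "(-u0)^2 + (-u0) > 0" using 2 by (intro add_pos_pos) auto
        ultimately have "h*((-u0)^2+(-u0)) \<le> 2*eps^2" by (simp add: le_divide_eq)
        then have "k*((-u0)^2+(-u0)) \<le> 1" unfolding k_def using e2 by (simp add: divide_le_eq)
        moreover have "1 < -u0" "v 0 = -u0" using 2 init unfolding v_def by auto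
        ultimately have r: "antimono v \<and> v \<longlonglongrightarrow> 1" using big[of k "-u0" v] kpos stv by blast
        then have "mono u" unfolding uv by (simp add: antimono_def mono_def)
        moreover have "u \<longlonglongrightarrow> -1" unfolding uv using r by (intro tendsto_minus) auto
        ultimately show ?thesis using 2 by simp
      next
        case 3
        have "h \<le> eps^2" using hh 3 unfolding hstar_def by simp
        then have "k \<le> 1/2" unfolding k_def using e2 by (simp add: divide_le_eq)
        from small[OF kpos this _ _ init st] 3 show ?thesis by simp
      next
        case 4
        have "h \<le> eps^2" using hh 4 unfolding hstar_def by simp
        then have "k \<le> 1/2" unfolding k_def using e2 by (simp add: divide_le_eq)
        moreover have "0 < -u0" "-u0 < 1" "v 0 = -u0" using 4 init unfolding v_def by auto
        ultimately have r: "mono v \<and> v \<longlonglongrightarrow> 1" using small[of k "-u0" v] kpos stv by blast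
        then have "antimono u" unfolding uv by (simp add: antimono_def mono_def)
        moreover have "u \<longlonglongrightarrow> -1" unfolding uv using r by (intro tendsto_minus) auto
        ultimately show ?thesis using 4 by simp
      qed
    qed
  qed
  show ?thesis using P1 P2 inf_part[OF eps] by blast
qed

end
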